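(* Let $A\in\mathbb{C}^{2\times2}$. The operator $D_A$ decouples into a direct sum $D_A=T_+\oplus T_-$ of an operator $T_+$ in $L^2(\mathbb{R}_+;\mathbb{C}^2)$ and an operator $T_-$ in $L^2(\mathbb{R}_-;\mathbb{C}^2)$ if and only if either $A=\pm 2i\sigma_1$, or neither of the matrices $2i\sigma_1-A$ and $2i\sigma_1+A$ is invertible. In that case $D_A=D_A^+\oplus D_A^-$, where $D_A^\pm$ is the operator in $L^2(\mathbb{R}_\pm;\mathbb{C}^2)$ with domain $\{\psi_\pm\in H^1(\mathbb{R}_\pm;\mathbb{C}^2): (2i\sigma_1\mp A)\psi_\pm(0)=0\}$ acting by $D_A^\pm\psi_\pm=\mathscr{D}\psi_\pm$.
   Context: Let $\sigma_0=I_2$, $\sigma_1=\begin{pmatrix}0&1\\1&0\end{pmatrix}$, $\sigma_3=\begin{pmatrix}1&0\\0&-1\end{pmatrix}$. Fix $m\in\mathbb{R}$. Identify $L^2(\mathbb{R};\mathbb{C}^2)=L^2(\mathbb{R}_-;\mathbb{C}^2)\oplus L^2(\mathbb{R}_+;\mathbb{C}^2)$, and for $\psi=\psi_-\oplus\psi_+\in H^1(\mathbb{R}_-;\mathbb{C}^2)\oplus H^1(\mathbb{R}_+;\mathbb{C}^2)$ let $\psi(0_\pm)\in\mathbb{C}^2$ denote the one-sided traces at $0$. Let $\mathscr{D}=-i\sigma_1\frac{d}{dx}+m\sigma_3$. For $A\in\mathbb{C}^{2\times2}$, $D_A$ is the operator in $L^2(\mathbb{R};\mathbb{C}^2)$ with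 domain $\{\psi=\psi_-\oplus\psi_+\in H^1(\mathbb{R}_-;\mathbb{C}^2)\oplus H^1(\mathbb{R}_+;\mathbb{C}^2) : (2i\sigma_1-A)\psi(0_+)=(2i\sigma_1+A)\psi(0_-)\}$ and action $D_A\psi=\mathscr{D}\psi_-\oplus\mathscr{D}\psi_+$. *)

theory Defs
  imports "HOL-Analysis.Analysis"
begin

type_synonym cvec = "complex^2"
type_synonym cmat = "complex^2^2"

definition sig1 :: cmat where
  "sig1 = (\<chi> i j. if i = j then 0 else 1)"

definition sig3 :: cmat where
  "sig3 = (\<chi> i j. if i = j then (if i = 1 then 1 else -1) else 0)"

definition smat :: "complex \<Rightarrow> cmat \<Rightarrow> cmat" where
  "smat c M = (\<chi> i j. c * M $ i $ j)"

text \<open>Elements of L2(S;C^2), S a half-line, represented by functions real => C^2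
  vanishing outside S, measurable and square integrable.\<close>
definition L2_on :: "real set \<Rightarrow> (real \<Rightarrow> cvec) \<Rightarrow> bool" where
  "L2_on S f \<longleftrightarrow> (\<forall>x. x \<notin> S \<longrightarrow> f x = 0) \<and> f \<in> borel_measurable lborel
      \<and> integrable lborel (\<lambda>x. (norm (f x))^2)"

text \<open>H1 on the half-lines: f is the continuous representative, g its (weak) derivative in L2.
  The trace at 0 is f 0.\<close>
definition H1_pos :: "(real \<Rightarrow> cvec) \<Rightarrow> (real \<Rightarrow> cvec) \<Rightarrow> bool" where
  "H1_pos f g \<longleftrightarrow> L2_on {0..} f \<and> L2_on {0..} g \<and>
      (\<forall>x\<ge>0. f x = f 0 + integral {0..x} g)"

definition H1_neg :: "(real \<Rightarrow> cvec) \<Rightarrow> (real \<Rightarrow> cvec) \<Rightarrow> bool" where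
  "H1_neg f g \<longleftrightarrow> L2_on {..0} f \<and> L2_on {..0} g \<and>
      (\<forall>x\<le>0. f x = f 0 - integral {x..0} g)"

definition dirac_out :: "real set \<Rightarrow> real \<Rightarrow> (real \<Rightarrow> cvec) \<Rightarrow> (real \<Rightarrow> cvec) \<Rightarrow> real \<Rightarrow> cvec" where
  "dirac_out S m f g = (\<lambda>x. if x \<in> S then (- \<i>) *s (sig1 *v g x) + m *\<^sub>R (sig3 *v f x) else 0)"

text \<open>Operators are represented by their graphs. The graph of D_A in
  L2(R_-;C^2) (+) L2(R_+;C^2): elements ((psi_-, psi_+), (phi_-, phi_+)).\<close>
definition graph_DA :: "real \<Rightarrow> cmat \<Rightarrow>
   (((real \<Rightarrow> cvec) \<times> (real \<Rightarrow> cvec)) \<times> ((real \<Rightarrow> cvec) \<times> (real \<Rightarrow> cvec))) set" where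
  "graph_DA m A = {((pm, pp), (qm, qp)). \<exists>gm gp. H1_neg pm gm \<and> H1_pos pp gp \<and>
      (smat (2*\<i>) sig1 - A) *v pp 0 = (smat (2*\<i>) sig1 + A) *v pm 0 \<and>
      qm = dirac_out {..0} m pm gm \<and> qp = dirac_out {0..} m pp gp}"

definition graph_Dplus :: "real \<Rightarrow> cmat \<Rightarrow> ((real \<Rightarrow> cvec) \<times> (real \<Rightarrow> cvec)) set" where
  "graph_Dplus m A = {(p, q). \<exists>g. H1_pos p g \<and> (smat (2*\<i>) sig1 - A) *v p 0 = 0 \<and>
      q = dirac_out {0..} m p g}"

definition graph_Dminus :: "real \<Rightarrow> cmat \<Rightarrow> ((real \<Rightarrow> cvec) \<times> (real \<Rightarrow> cvec)) set" where
  "graph_Dminus m A = {(p, q). \<exists>g. H1_neg p g \<and> (smat (2*\<i>) sig1 + A) *v p 0 = 0 \<and>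
      q = dirac_out {..0} m p g}"

definition osum :: "('a \<times> 'b) set \<Rightarrow> ('c \<times> 'd) set \<Rightarrow> (('a \<times> 'c) \<times> ('b \<times> 'd)) set" where
  "osum Tm Tp = {((pm, pp), (qm, qp)). (pm, qm) \<in> Tm \<and> (pp, qp) \<in> Tp}"

end

theory Submission imports Defs begin
lemma key1:
  fixes A :: cmat and x y :: cvec
  assumes dP: "det (smat (2*\<i>) sig1 - A) = 0" and dM: "det (smat (2*\<i>) sig1 + A) = 0"
    and e: "(smat (2*\<i>) sig1 - A) *v y = (smat (2*\<i>) sig1 + A) *v x"
  shows "(smat (2*\<i>) sig1 + A) *v x = 0"
proof -
  have 1: "(1::2) \<noteq> 2" by simp
  let ?a = "A$1$1" let ?b = "A$1$2" let ?c = "A$2$1" let ?d = "A$2$2"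
  have dP': "?a * ?d - (2*\<i> - ?b)*(2*\<i> - ?c) = 0" using dP by (simp add: det_2 smat_def sig1_def) 
  have dM': "?a * ?d - (2*\<i> + ?b)*(2*\<i> + ?c) = 0" using dM by (simp add: det_2 smat_def sig1_def)
  have e1: "- ?a * y$1 + (2*\<i> - ?b) * y$2 = ?a * x$1 + (2*\<i> + ?b) * x$2"
    using arg_cong[OF e, of "\<lambda>v. v$1"] by (simp add: matrix_vector_mult_def sum_2 smat_def sig1_def algebra_simps)
  have e2: "(2*\<i> - ?c) * y$1 - ?d * y$2 = (2*\<i> + ?c) * x$1 + ?d * x$2"
    using arg_cong[OF e, of "\<lambda>v. v$2"] by (simp add: matrix_vector_mult_def sum_2 smat_def sig1_def algebra_simps)
  have h1: "(?a * x$1 + (2*\<i> + ?b) * x$2) * (4*\<i>) = 0" using dP' dM' e1 e2 by algebra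
  have h2: "((2*\<i> + ?c) * x$1 + ?d * x$2) * (4*\<i>) = 0" using dP' dM' e1 e2 by algebra
  have g1: "?a * x$1 + (2*\<i> + ?b) * x$2 = 0" using h1 by simp
  have g2: "(2*\<i> + ?c) * x$1 + ?d * x$2 = 0" using h2 by simp
  show ?thesis using g1 g2 by (simp add: vec_eq_iff forall_2 matrix_vector_mult_def sum_2 smat_def sig1_def algebra_simps)
qed
lemma ex_nz: fixes M :: cmat assumes "M \<noteq> 0" shows "\<exists>x. M *v x \<noteq> 0"
  using assms matrix_eq[of M 0] by (auto simp: matrix_vector_mult_def vec_eq_iff)

lemma inv_solve: fixes P :: cmat assumes "invertible P" shows "\<exists>y. P *v y = w"
proof -
  from assms obtain P' where "P ** P' = mat 1" unfolding invertible_def by blast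
  then have "P *v (P' *v w) = w" by (simp add: matrix_vector_mul_assoc)
  then show ?thesis by blast
qed

lemma key2:
  fixes A :: cmat
  assumes "\<not> (A = smat (2*\<i>) sig1 \<or> A = - smat (2*\<i>) sig1 \<or>
            (\<not> invertible (smat (2*\<i>) sig1 - A) \<and> \<not> invertible (smat (2*\<i>) sig1 + A)))"
  shows "\<exists>x y. (smat (2*\<i>) sig1 - A) *v y = (smat (2*\<i>) sig1 + A) *v x \<and> (smat (2*\<i>) sig1 + A) *v x \<noteq> 0"
proof -
  let ?P = "smat (2*\<i>) sig1 - A" let ?M = "smat (2*\<i>) sig1 + A"
  have P0: "?P \<noteq> 0" using assms by force
  have M0: "?M \<noteq> 0"
  proof
    assume h: "?M = 0"
    have "A = ?M - smat (2*\<i>) sig1" by simp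
    also have "\<dots> = - smat (2*\<i>) sig1" using h by simp
    finally show False using assms by blast
  qed
  show ?thesis
  proof (cases "invertible ?P")
    case True
    obtain x where x: "?M *v x \<noteq> 0" using ex_nz[OF M0] by blast
    obtain y where "?P *v y = ?M *v x" using inv_solve[OF True] by blast
    then show ?thesis using x by blast
  next
    case False
    then have Mi: "invertible ?M" using assms by blast
    obtain y where y: "?P *v y \<noteq> 0" using ex_nz[OF P0] by blast
    obtain x where "?M *v x = ?P *v y" using inv_solve[OF Mi] by blast
    then show ?thesis using y by metis
  qed
qed
lemma H1_pos_ex: fixes v :: cvec shows "\<exists>p g. H1_pos p g \<and> p 0 = v"
proof -
  define p where "p = (\<lambda>x::real. if x \<in> {0..1} then (1-x) *\<^sub>R v else 0)"
  define g where "g = (\<lambda>x::real. if x \<in> {0..1} then - v else 0)"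
  have mp: "p \<in> borel_measurable lborel" unfolding p_def by measurable
  have mg: "g \<in> borel_measurable lborel" unfolding g_def by measurable
  have ip: "integrable lborel (\<lambda>x. (norm (p x))^2)"
  proof -
    have "integrable lborel (\<lambda>x. ((1-x)^2 * (norm v)^2) * indicator {0..1} x)"
      by (rule borel_integrable_atLeastAtMost) (intro continuous_intros)
    moreover have "(\<lambda>x. ((1-x)^2 * (norm v)^2) * indicator {0..1} x) = (\<lambda>x. (norm (p x))^2)"
      by (auto simp: p_def indicator_def power_mult_distrib abs_le_iff)
    ultimately show ?thesis by simp
  qed
  have ig: "integrable lborel (\<lambda>x. (norm (g x))^2)"
  proof -
    have "integrable lborel (\<lambda>x::real. ((norm v)^2) * indicator {0..1} x)"
      using borel_integrable_atLeastAtMost[of 0 1 "\<lambda>x. (norm v)^2", OF continuous_const] .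
    moreover have "(\<lambda>x::real. ((norm v)^2) * indicator {0..1} x) = (\<lambda>x. (norm (g x))^2)"
      by (auto simp: g_def indicator_def)
    ultimately show ?thesis by simp
  qed
  have eq: "p x = p 0 + integral {0..x} g" if "x \<ge> 0" for x
  proof -
    have "integral {0..x} g = integral ({0..1} \<inter> {0..x}) (\<lambda>_. - v)"
      unfolding g_def by (rule integral_restrict_Int)
    also have "{0..1} \<inter> {0..x} = {0..min 1 x}" by auto
    finally have "integral {0..x} g = min 1 x *\<^sub>R (- v)" using that by simp
    then show ?thesis using that by (auto simp: p_def min_def algebra_simps)
  qed
  have "H1_pos p g" unfolding H1_pos_def L2_on_def
    using mp mg ip ig eq by (auto simp: p_def g_def)
  moreover have "p 0 = v" by (simp add: p_def)
  ultimately show ?thesis by blast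
qed

lemma H1_neg_ex: fixes v :: cvec shows "\<exists>p g. H1_neg p g \<and> p 0 = v"
proof -
  define p where "p = (\<lambda>x::real. if x \<in> {-1..0} then (1+x) *\<^sub>R v else 0)"
  define g where "g = (\<lambda>x::real. if x \<in> {-1..0} then v else 0)"
  have mp: "p \<in> borel_measurable lborel" unfolding p_def by measurable
  have mg: "g \<in> borel_measurable lborel" unfolding g_def by measurable
  have ip: "integrable lborel (\<lambda>x. (norm (p x))^2)"
  proof -
    have "integrable lborel (\<lambda>x. ((1+x)^2 * (norm v)^2) * indicator {-1..0} x)"
      by (rule borel_integrable_atLeastAtMost) (intro continuous_intros)
    moreover have "(\<lambda>x. ((1+x)^2 * (norm v)^2) * indicator {-1..0} x) = (\<lambda>x. (norm (p x))^2)"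
      by (auto simp: p_def indicator_def power_mult_distrib abs_le_iff)
    ultimately show ?thesis by simp
  qed
  have ig: "integrable lborel (\<lambda>x. (norm (g x))^2)"
  proof -
    have "integrable lborel (\<lambda>x::real. ((norm v)^2) * indicator {-1..0} x)"
      using borel_integrable_atLeastAtMost[of "-1" 0 "\<lambda>x. (norm v)^2", OF continuous_const] .
    moreover have "(\<lambda>x::real. ((norm v)^2) * indicator {-1..0} x) = (\<lambda>x. (norm (g x))^2)"
      by (auto simp: g_def indicator_def)
    ultimately show ?thesis by simp
  qed
  have eq: "p x = p 0 - integral {x..0} g" if "x \<le> 0" for x
  proof -
    have "integral {x..0} g = integral ({-1..0} \<inter> {x..0}) (\<lambda>_. v)"
      unfolding g_def by (rule integral_restrict_Int)
    also have "{-1..0} \<inter> {x..0} = {max (-1) x..0}" by auto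
    finally have "integral {x..0} g = (- max (-1) x) *\<^sub>R v" using that by simp
    then show ?thesis using that by (auto simp: p_def max_def algebra_simps)
  qed
  have "H1_neg p g" unfolding H1_neg_def L2_on_def
    using mp mg ip ig eq by (auto simp: p_def g_def)
  moreover have "p 0 = v" by (simp add: p_def)
  ultimately show ?thesis by blast
qed
lemma H1_zero: "H1_pos (\<lambda>_. 0) (\<lambda>_. 0)" "H1_neg (\<lambda>_. 0) (\<lambda>_. 0)"
  by (auto simp: H1_pos_def H1_neg_def L2_on_def)

lemma sum_case:
  fixes A :: cmat
  assumes C: "A = smat (2*\<i>) sig1 \<or> A = - smat (2*\<i>) sig1 \<or>
            (\<not> invertible (smat (2*\<i>) sig1 - A) \<and> \<not> invertible (smat (2*\<i>) sig1 + A))"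
  shows "graph_DA m A = osum (graph_Dminus m A) (graph_Dplus m A)"
proof -
  let ?P = "smat (2*\<i>) sig1 - A" let ?M = "smat (2*\<i>) sig1 + A"
  have k: "?P *v y = ?M *v x \<longleftrightarrow> ?M *v x = 0 \<and> ?P *v y = 0" for x y
  proof -
    have "?P *v y = ?M *v x \<Longrightarrow> ?M *v x = 0"
    proof -
      assume e: "?P *v y = ?M *v x"
      consider "A = smat (2*\<i>) sig1" | "A = - smat (2*\<i>) sig1"
        | "\<not> invertible ?P \<and> \<not> invertible ?M" using C by blast
      then show "?M *v x = 0"
      proof cases
        case 1 then have "?P = 0" by simp
        then show ?thesis using e by simp
      next
        case 2 then show ?thesis by simp
      next
        case 3 then show ?thesis using key1[OF _ _ e] by (simp add: invertible_det_nz)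
      qed
    qed
    then show ?thesis by auto
  qed
  show ?thesis
    unfolding graph_DA_def osum_def graph_Dminus_def graph_Dplus_def k by blast
qed

theorem proposition2p2:
  fixes m :: real and A :: cmat
  shows "((\<exists>Tp Tm. graph_DA m A = osum Tm Tp) \<longleftrightarrow>
           (A = smat (2*\<i>) sig1 \<or> A = - smat (2*\<i>) sig1 \<or>
            (\<not> invertible (smat (2*\<i>) sig1 - A) \<and> \<not> invertible (smat (2*\<i>) sig1 + A))))
       \<and> ((\<exists>Tp Tm. graph_DA m A = osum Tm Tp) \<longrightarrow>
            graph_DA m A = osum (graph_Dminus m A) (graph_Dplus m A))"
proof -
  let ?C = "A = smat (2*\<i>) sig1 \<or> A = - smat (2*\<i>) sig1 \<or>
            (\<not> invertible (smat (2*\<i>) sig1 - A) \<and> \<not> invertible (smat (2*\<i>) sig1 + A))"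
  have L2: "?C" if "graph_DA m A = osum Tm Tp" for Tm Tp
  proof (rule ccontr)
    assume nC: "\<not> ?C"
    obtain x y where e: "(smat (2*\<i>) sig1 - A) *v y = (smat (2*\<i>) sig1 + A) *v x"
      and nz: "(smat (2*\<i>) sig1 + A) *v x \<noteq> 0" using key2[OF nC] by blast
    obtain pm gm where pm: "H1_neg pm gm" "pm 0 = x" using H1_neg_ex by blast
    obtain pp gp where pp: "H1_pos pp gp" "pp 0 = y" using H1_pos_ex by blast
    have "((pm, pp), (dirac_out {..0} m pm gm, dirac_out {0..} m pp gp)) \<in> graph_DA m A"
      unfolding graph_DA_def using pm pp e by blast
    then have 1: "(pm, dirac_out {..0} m pm gm) \<in> Tm" using that by (auto simp: osum_def)
    have "(((\<lambda>_. 0), (\<lambda>_. 0)), (dirac_out {..0} m (\<lambda>_. 0) (\<lambda>_. 0), dirac_out {0..} m (\<lambda>_. 0) (\<lambda>_. 0))) \<in> graph_DA m A"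
      unfolding graph_DA_def using H1_zero by auto
    then have 2: "((\<lambda>_. 0), dirac_out {0..} m (\<lambda>_. 0) (\<lambda>_. 0)) \<in> Tp" using that by (auto simp: osum_def)
    have "((pm, (\<lambda>_. 0)), (dirac_out {..0} m pm gm, dirac_out {0..} m (\<lambda>_. 0) (\<lambda>_. 0))) \<in> graph_DA m A"
      using that 1 2 by (auto simp: osum_def)
    then have "(smat (2*\<i>) sig1 - A) *v 0 = (smat (2*\<i>) sig1 + A) *v x"
      unfolding graph_DA_def using pm by auto
    then show False using nz by simp
  qed
  show ?thesis using L2 sum_case by metis
qed

end
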